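(* Let $d\ge2$. If $p<1-p_c^{\operatorname{bond}}(d)$, then \[ P_p\bigl(K(\omega)\text{ encloses }\tilde B(n)\bigr)\longrightarrow 0\quad\text{as }n\to\infty. \]
   Context: A face is a $(d-1)$-dimensional elementary cube in $\mathbb{R}^d$ (a product of intervals $[l,l]$ or $[l,l+1]$, $l\in\mathbb{Z}$, with exactly one degenerate factor). In face percolation with parameter $p$ each face is open independently with probability $p$ (measure $P_p$); $K(\omega)$ is the union of open faces. $(\mathbb{Z}^d)^*=\mathbb{Z}^d+(1/2,\dots,1/2)$ and $\tilde B(n)=\{x^*\in(\mathbb{Z}^d)^*:\|x^*\|_\infty<n\}$. A union $X$ of faces encloses $V\subset(\mathbb{Z}^d)^*$ if there are finitely many faces $Q_1,\dots,Q_k$ of $X$ such that $V$ is contained in a bounded connected component of $\mathbb{R}^d\setminus\bigcup_{i=1}^kQ_i$. $p_c^{\operatorname{bond}}(d)$ is the critical probability of Bernoulli bond percolation on $\mathbb{Z}^d$. *)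

theory Defs
  imports "HOL-Probability.Probability"
begin

text \<open>Sites of the lattice Z^d, with d = CARD('n).\<close>
type_synonym 'n site = "'n \<Rightarrow> int"

text \<open>A face is encoded as (x, i): the (d-1)-cube with degenerate factor [x i, x i]
  in direction i and factors [x j, x j + 1] for j \<noteq> i. This is a bijection
  onto the set of all faces.\<close>
type_synonym 'n face = "'n site \<times> 'n"

definition face_set :: "'n::finite face \<Rightarrow> (real^'n) set" where
  "face_set f = (case f of (x, i) \<Rightarrow>
     {y. y $ i = of_int (x i) \<and>
         (\<forall>j. j \<noteq> i \<longrightarrow> of_int (x j) \<le> y $ j \<and> y $ j \<le> of_int (x j) + 1)})"

definition face_perc :: "real \<Rightarrow> ('n::finite face \<Rightarrow> bool) measure" where
  "face_perc p = PiM UNIV (\<lambda>_. measure_pmf (bernoulli_pmf p))"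

definition K :: "('n::finite face \<Rightarrow> bool) \<Rightarrow> (real^'n) set" where
  "K \<omega> = \<Union> {face_set f | f. \<omega> f}"

definition encloses :: "(real^'n::finite) set \<Rightarrow> (real^'n) set \<Rightarrow> bool" where
  "encloses X V \<longleftrightarrow> (\<exists>F::'n face set. finite F \<and> (\<forall>f\<in>F. face_set f \<subseteq> X) \<and>
     (\<exists>x. x \<notin> \<Union>(face_set ` F) \<and>
          bounded (connected_component_set (- \<Union>(face_set ` F)) x) \<and>
          V \<subseteq> connected_component_set (- \<Union>(face_set ` F)) x))"

definition dual_box :: "nat \<Rightarrow> (real^'n::finite) set" where
  "dual_box n = {(\<chi> i. of_int (z i) + 1/2) | z::'n site.
                   \<forall>i. \<bar>of_int (z i) + 1/2\<bar> < real n}"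

definition bond_perc :: "real \<Rightarrow> ('n::finite site \<times> 'n \<Rightarrow> bool) measure" where
  "bond_perc p = PiM UNIV (\<lambda>_. measure_pmf (bernoulli_pmf p))"

definition bond_adj :: "('n site \<times> 'n \<Rightarrow> bool) \<Rightarrow> 'n site \<Rightarrow> 'n site \<Rightarrow> bool" where
  "bond_adj \<omega> x y \<longleftrightarrow>
     (\<exists>i. \<omega> (x, i) \<and> y = x(i := x i + 1)) \<or> (\<exists>i. \<omega> (y, i) \<and> x = y(i := y i + 1))"

definition cluster :: "('n site \<times> 'n \<Rightarrow> bool) \<Rightarrow> 'n site \<Rightarrow> 'n site set" where
  "cluster \<omega> x = {y. (bond_adj \<omega>)\<^sup>*\<^sup>* x y}"

definition bond_theta :: "'n::finite itself \<Rightarrow> real \<Rightarrow> real" where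
  "bond_theta _ p = measure (bond_perc p :: ('n site \<times> 'n \<Rightarrow> bool) measure)
                      {\<omega>. infinite (cluster \<omega> ((\<lambda>_. 0)::'n site))}"

definition pc_bond :: "'n::finite itself \<Rightarrow> real" where
  "pc_bond t = Sup {p. 0 \<le> p \<and> p \<le> 1 \<and> bond_theta t p = 0}"

end

theory Submission
  imports Defs
begin


lemma half_ne_int: "(of_int a :: real) + 1/2 \<noteq> of_int b"
proof
  assume "(of_int a :: real) + 1/2 = of_int b"
  then have "(of_int (2*a+1) :: real) = of_int (2*b)" by simp
  then have "2*a+1 = 2*b" by (simp only: of_int_eq_iff)
  then show False by presburger
qed

lemma half_between: "(of_int y :: real) \<le> of_int x + 1/2 \<Longrightarrow> of_int x + 1/2 \<le> (of_int y::real) + 1 \<Longrightarrow> y = x"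
proof -
  assume a: "(of_int y :: real) \<le> of_int x + 1/2" and b: "of_int x + 1/2 \<le> (of_int y::real) + 1"
  have "(of_int (y - x) :: real) < 1" unfolding of_int_diff using a by linarith
  then have 1: "y - x < 1" by simp
  have "(of_int (x - y) :: real) < 1" unfolding of_int_diff using b by linarith
  then have "x - y < 1" by simp
  with 1 show ?thesis by simp
qed

definition cpt :: "'n::finite site \<Rightarrow> real^'n" where
  "cpt y = (\<chi> i. of_int (y i) + 1/2)"

definition gface :: "'n site \<times> 'n \<Rightarrow> 'n face" where
  "gface b = (case b of (x, i) \<Rightarrow> (x(i := x i + 1), i))"

definition Phi :: "('n face \<Rightarrow> bool) \<Rightarrow> ('n site \<times> 'n \<Rightarrow> bool)" where
  "Phi \<omega> = (\<lambda>b. \<not> \<omega> (gface b))"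

lemma face_in_K: "face_set f \<subseteq> K \<omega> \<longleftrightarrow> \<omega> (f::'n::finite face)"
proof
  assume "\<omega> f" then show "face_set f \<subseteq> K \<omega>" unfolding K_def by blast
next
  assume sub: "face_set f \<subseteq> K \<omega>"
  obtain x i where f: "f = (x, i)" by (cases f)
  define m :: "real^'n" where "m = (\<chi> j. if j = i then of_int (x i) else of_int (x j) + 1/2)"
  have "m \<in> face_set f" unfolding f face_set_def m_def by auto
  with sub obtain h where h: "\<omega> h" "m \<in> face_set h" unfolding K_def by auto
  obtain y k where hk: "h = (y, k)" by (cases h)
  have mk: "m $ k = of_int (y k)" and mj: "\<And>j. j \<noteq> k \<Longrightarrow> of_int (y j) \<le> m $ j \<and> m $ j \<le> of_int (y j) + 1"
    using h(2) unfolding hk face_set_def by auto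
  have ki: "k = i"
  proof (rule ccontr)
    assume "k \<noteq> i"
    then have "m $ k = of_int (x k) + 1/2" unfolding m_def by simp
    with mk half_ne_int show False by metis
  qed
  have "y i = x i" using mk ki unfolding m_def by simp
  moreover have "y j = x j" if "j \<noteq> i" for j
    using mj[of j] that ki half_between[of "y j" "x j"] unfolding m_def by simp
  ultimately have "y = x" by (metis ext)
  with hk ki f h show "\<omega> f" by simp
qed

lemma segment_face:
  fixes w :: "'n::finite site"
  assumes "z \<in> closed_segment (cpt w) (cpt (w(i := w i + 1)))" "z \<in> face_set h"
  shows "h = gface (w, i)"
proof -
  obtain u where u: "0 \<le> u" "u \<le> 1" "z = (1 - u) *\<^sub>R cpt w + u *\<^sub>R cpt (w(i := w i + 1))"
    using assms(1) unfolding closed_segment_def by auto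
  have zc: "z $ j = (if j = i then of_int (w i) + 1/2 + u else of_int (w j) + 1/2)" for j
    unfolding u(3) cpt_def by (auto simp: algebra_simps)
  obtain y k where hk: "h = (y, k)" by (cases h)
  have zk: "z $ k = of_int (y k)" and zj: "\<And>j. j \<noteq> k \<Longrightarrow> of_int (y j) \<le> z $ j \<and> z $ j \<le> of_int (y j) + 1"
    using assms(2) unfolding hk face_set_def by auto
  have ki: "k = i"
  proof (rule ccontr)
    assume "k \<noteq> i"
    then have "z $ k = of_int (w k) + 1/2" using zc by simp
    with zk half_ne_int show False by metis
  qed
  have "of_int (y i) = of_int (w i) + 1/2 + u" using zk zc ki by simp
  then have "of_int (y i - w i) - 1/2 = u" by simp
  with u have "(of_int (y i - w i) :: real) \<ge> 1/2" "(of_int (y i - w i) :: real) \<le> 3/2" by linarith+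
  then have "y i - w i \<ge> 1" "y i - w i \<le> 1" by linarith+
  then have yi: "y i = w i + 1" by simp
  have "y j = w j" if "j \<noteq> i" for j
    using zj[of j] that ki zc[of j] half_between[of "y j" "w j"] by simp
  with yi have "y = w(i := w i + 1)" by (auto intro!: ext)
  then show ?thesis using hk ki unfolding gface_def by simp
qed

lemma finite_bounded_sites:
  assumes "bounded (C :: (real^'n::finite) set)"
  shows "finite {z :: 'n site. cpt z \<in> C}"
proof -
  obtain B where B: "\<And>v. v \<in> C \<Longrightarrow> norm v \<le> B" using assms unfolding bounded_iff by auto
  define S0 where "S0 = {-\<lceil>B\<rceil> - 1 .. \<lceil>B\<rceil> + 1}"
  have "{z :: 'n site. cpt z \<in> C} \<subseteq> PiE UNIV (\<lambda>_. S0)"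
  proof
    fix z assume "z \<in> {z :: 'n site. cpt z \<in> C}"
    then have zc: "cpt z \<in> C" by simp
    have "z i \<in> S0" for i
    proof -
      have "\<bar>cpt z $ i\<bar> \<le> B" using B[OF zc] component_le_norm_cart[of "cpt z" i] by linarith
      then have "\<bar>of_int (z i) + 1/2\<bar> \<le> B" unfolding cpt_def by simp
      then have "of_int (z i) \<le> B" "- B - 1 \<le> of_int (z i)" by linarith+
      moreover have "B \<le> of_int \<lceil>B\<rceil>" by (rule le_of_int_ceiling)
      ultimately have "(of_int (z i)::real) \<le> of_int (\<lceil>B\<rceil> + 1)" "(of_int (-\<lceil>B\<rceil> - 1)::real) \<le> of_int (z i)" by simp_all linarith+
      then show ?thesis unfolding S0_def by (simp only: of_int_le_iff atLeastAtMost_iff) 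
    qed
    then show "z \<in> PiE UNIV (\<lambda>_. S0)" by (simp add: PiE_UNIV_domain)
  qed
  moreover have "finite (PiE (UNIV :: 'n set) (\<lambda>_. S0))" by (rule finite_PiE) (auto simp: S0_def)
  ultimately show ?thesis by (rule finite_subset)
qed

lemma segment_avoids:
  assumes "\<forall>f\<in>F. face_set f \<subseteq> K \<omega>" "Phi \<omega> (w, i)"
  shows "closed_segment (cpt w) (cpt (w(i := w i + 1))) \<subseteq> - \<Union>(face_set ` F)"
proof
  fix z assume z: "z \<in> closed_segment (cpt w) (cpt (w(i := w i + 1)))"
  show "z \<in> - \<Union>(face_set ` F)"
  proof
    assume "z \<in> \<Union>(face_set ` F)"
    then obtain h where h: "h \<in> F" "z \<in> face_set h" by auto
    then have "h = gface (w, i)" using segment_face[OF z] by blast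
    moreover have "\<omega> h" using assms(1) h(1) face_in_K by blast
    ultimately show False using assms(2) unfolding Phi_def by simp
  qed
qed

lemma enclosed_finite:
  fixes \<omega> :: "'n::finite face \<Rightarrow> bool"
  assumes F: "\<forall>f\<in>F. face_set f \<subseteq> K \<omega>"
    and bd: "bounded (connected_component_set (- \<Union>(face_set ` F)) x)"
    and y: "cpt y \<in> connected_component_set (- \<Union>(face_set ` F)) x"
  shows "finite (cluster (Phi \<omega>) y)"
proof -
  let ?U = "- \<Union>(face_set ` F)"
  let ?C = "connected_component_set ?U x"
  have stp: "cpt b \<in> ?C" if "cpt a \<in> ?C" "Phi \<omega> (w, i)"
     "(a = w \<and> b = w(i := w i + 1)) \<or> (b = w \<and> a = w(i := w i + 1))" for a b w i
  proof -
    let ?S = "closed_segment (cpt w) (cpt (w(i := w i + 1)))"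
    have S: "?S \<subseteq> ?U" by (rule segment_avoids[OF F that(2)])
    have aS: "cpt a \<in> ?S" and bS: "cpt b \<in> ?S" using that(3) by auto
    have "?S \<subseteq> connected_component_set ?U (cpt a)"
      by (rule connected_component_maximal[OF aS connected_segment S])
    also have "\<dots> = ?C" by (rule connected_component_eq[OF that(1)])
    finally show ?thesis using bS by blast
  qed
  have "cpt z \<in> ?C" if "z \<in> cluster (Phi \<omega>) y" for z
  proof -
    have "(bond_adj (Phi \<omega>))\<^sup>*\<^sup>* y z" using that unfolding cluster_def by simp
    then show ?thesis
    proof (induction rule: rtranclp_induct)
      case base then show ?case using y .
    next
      case (step b c)
      from step(2) show ?case unfolding bond_adj_def
      proof (elim disjE exE conjE)
        fix i assume "Phi \<omega> (b, i)" "c = b(i := b i + 1)"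
        then show ?thesis using step(3) stp[where a=b and b=c and w=b and i=i] by blast
      next
        fix i assume "Phi \<omega> (c, i)" "b = c(i := c i + 1)"
        then show ?thesis using step(3) stp[where a=b and b=c and w=c and i=i] by blast
      qed
    qed
  qed
  then have "cluster (Phi \<omega>) y \<subseteq> {z. cpt z \<in> ?C}" by blast
  then show ?thesis using finite_bounded_sites[OF bd] finite_subset by blast
qed



lemma finite_sites_iff:
  fixes A :: "'n::finite site set"
  shows "finite A \<longleftrightarrow> (\<exists>m::nat. \<forall>z\<in>A. \<forall>i. \<bar>z i\<bar> \<le> int m)"
proof
  assume fA: "finite A"
  define T where "T = (\<lambda>(z, i). \<bar>z i\<bar>) ` (A \<times> (UNIV :: 'n set))"
  have fT: "finite T" unfolding T_def using fA by simp
  define m where "m = nat (Max (insert 0 T))"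
  have "\<forall>z\<in>A. \<forall>i. \<bar>z i\<bar> \<le> int m"
  proof (intro ballI allI)
    fix z i assume "z \<in> A"
    then have "\<bar>z i\<bar> \<in> insert 0 T" unfolding T_def by force
    then have "\<bar>z i\<bar> \<le> Max (insert 0 T)" using fT by simp
    moreover have "0 \<le> Max (insert 0 T)" using fT by simp
    ultimately show "\<bar>z i\<bar> \<le> int m" unfolding m_def by simp
  qed
  then show "\<exists>m::nat. \<forall>z\<in>A. \<forall>i. \<bar>z i\<bar> \<le> int m" by blast
next
  assume "\<exists>m::nat. \<forall>z\<in>A. \<forall>i. \<bar>z i\<bar> \<le> int m"
  then obtain m :: nat where m: "\<forall>z\<in>A. \<forall>i. \<bar>z i\<bar> \<le> int m" by blast
  have "A \<subseteq> PiE UNIV (\<lambda>_. {- int m .. int m})"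
    using m by (force simp: PiE_UNIV_domain abs_le_iff)
  moreover have "finite (PiE (UNIV :: 'n set) (\<lambda>_. {- int m .. int m}))" by (rule finite_PiE) auto
  ultimately show "finite A" by (rule finite_subset)
qed

abbreviation BN :: "('n::finite site \<times> 'n \<Rightarrow> bool) measure" where
  "BN \<equiv> PiM UNIV (\<lambda>_. count_space UNIV)"

lemma pred_const_any[measurable (raw)]: "Measurable.pred M (\<lambda>x. c)"
  by (rule measurable_const) simp

lemma pred_comp_BN[measurable]: "Measurable.pred BN (\<lambda>\<eta>. \<eta> (b::'n::finite site \<times> 'n))"
  by (rule measurable_component_singleton) simp

lemma pred_adj[measurable]: "Measurable.pred BN (\<lambda>\<eta>. bond_adj \<eta> w z)"
  unfolding bond_adj_def by measurable

lemma pred_relpow[measurable]: "Measurable.pred BN (\<lambda>\<eta>. (bond_adj \<eta> ^^ k) y z)"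
proof (induction k arbitrary: z)
  case 0
  show ?case by simp
next
  case (Suc k)
  have "(\<lambda>\<eta>. (bond_adj \<eta> ^^ Suc k) y z) = (\<lambda>\<eta>. \<exists>w. (bond_adj \<eta> ^^ k) y w \<and> bond_adj \<eta> w z)"
    by (auto simp: relpowp_Suc_right OO_def)
  also have "Measurable.pred BN \<dots>" using Suc by measurable
  finally show ?case .
qed

lemma pred_rtrancl[measurable]: "Measurable.pred BN (\<lambda>\<eta>. (bond_adj \<eta>)\<^sup>*\<^sup>* y z)"
proof -
  have "(\<lambda>\<eta>. (bond_adj \<eta>)\<^sup>*\<^sup>* y z) = (\<lambda>\<eta>. \<exists>k. (bond_adj \<eta> ^^ k) y z)"
    by (auto simp: rtranclp_power)
  also have "Measurable.pred BN \<dots>" by measurable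
  finally show ?thesis .
qed

lemma pred_finite_cluster[measurable]: "Measurable.pred BN (\<lambda>\<eta>. finite (cluster \<eta> y))"
proof -
  have "(\<lambda>\<eta>. finite (cluster \<eta> y)) = (\<lambda>\<eta>. \<exists>m::nat. \<forall>z. (bond_adj \<eta>)\<^sup>*\<^sup>* y z \<longrightarrow> (\<forall>i. \<bar>z i\<bar> \<le> int m))"
  proof (intro ext)
    fix \<eta> show "finite (cluster \<eta> y) = (\<exists>m::nat. \<forall>z. (bond_adj \<eta>)\<^sup>*\<^sup>* y z \<longrightarrow> (\<forall>i. \<bar>z i\<bar> \<le> int m))"
      using finite_sites_iff[of "cluster \<eta> y"] unfolding cluster_def by auto
  qed
  also have "Measurable.pred BN \<dots>" by measurable
  finally show ?thesis .
qed

lemma cluster_mono: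
  assumes "\<And>b. \<eta> b \<Longrightarrow> \<eta>' b"
  shows "cluster \<eta> y \<subseteq> cluster \<eta>' y"
proof -
  have "bond_adj \<eta> \<le> bond_adj \<eta>'" unfolding bond_adj_def using assms by (auto simp: le_fun_def)
  then have "(bond_adj \<eta>)\<^sup>*\<^sup>* \<le> (bond_adj \<eta>')\<^sup>*\<^sup>*" by (rule rtranclp_mono)
  then show ?thesis unfolding cluster_def by (auto simp: le_fun_def)
qed

lemma cluster_finite_mod:
  fixes \<eta> \<eta>' :: "'n::finite site \<times> 'n \<Rightarrow> bool"
  assumes T: "finite T" and sub: "\<And>b. \<eta>' b \<Longrightarrow> \<eta> b \<or> b \<in> T" and fin: "\<And>t. finite (cluster \<eta> t)"
  shows "finite (cluster \<eta>' y)"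
proof -
  define E where "E = insert y (fst ` T \<union> (\<lambda>(x,i). x(i := x i + 1)) ` T)"
  have fE: "finite E" using T by (simp add: E_def)
  have "\<exists>t\<in>E. (bond_adj \<eta>)\<^sup>*\<^sup>* t z" if "(bond_adj \<eta>')\<^sup>*\<^sup>* y z" for z
    using that
  proof (induction rule: rtranclp_induct)
    case base show ?case by (auto simp: E_def)
  next
    case (step z w)
    from step.IH obtain t where t: "t \<in> E" "(bond_adj \<eta>)\<^sup>*\<^sup>* t z" by blast
    show ?case
    proof (cases "bond_adj \<eta> z w")
      case True then show ?thesis using t by (meson rtranclp.rtrancl_into_rtrancl)
    next
      case False
      from step.hyps(2) have "w \<in> E" unfolding bond_adj_def
      proof (elim disjE exE conjE)
        fix i assume a: "\<eta>' (z, i)" "w = z(i := z i + 1)"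
        with False sub have "(z,i) \<in> T" unfolding bond_adj_def by blast
        then show "w \<in> E" using a(2) unfolding E_def by force
      next
        fix i assume a: "\<eta>' (w, i)" "z = w(i := w i + 1)"
        with False sub have "(w,i) \<in> T" unfolding bond_adj_def by blast
        then show "w \<in> E" unfolding E_def by force
      qed
      then show ?thesis by blast
    qed
  qed
  then have "cluster \<eta>' y \<subseteq> (\<Union>t\<in>E. cluster \<eta> t)" unfolding cluster_def by blast
  moreover have "finite (\<Union>t\<in>E. cluster \<eta> t)" using fE fin by blast
  ultimately show ?thesis by (rule finite_subset)
qed

lemma space_bond[simp]: "space (bond_perc q) = UNIV"
  unfolding bond_perc_def by (simp add: space_PiM PiE_UNIV_domain)

lemma sets_bond[measurable_cong]: "sets (bond_perc q :: ('n::finite site \<times> 'n \<Rightarrow> bool) measure) = sets BN"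
  unfolding bond_perc_def by (rule sets_PiM_cong) auto

lemma prob_bond: "prob_space (bond_perc q)"
  unfolding bond_perc_def by (intro prob_space_PiM prob_space_measure_pmf)

definition Xev :: "('n::finite site \<times> 'n \<Rightarrow> bool) set" where
  "Xev = {\<eta>. \<forall>y. finite (cluster \<eta> y)}"

lemma Xev_sets: "Xev \<in> sets BN"
proof -
  have "{\<eta> \<in> space BN. \<forall>y. finite (cluster \<eta> y)} \<in> sets BN" by measurable
  then show ?thesis unfolding Xev_def by (simp add: space_PiM PiE_UNIV_domain)
qed

lemma infinite_bonds: "infinite (UNIV :: ('n::finite site \<times> 'n) set)"
proof
  assume "finite (UNIV :: ('n site \<times> 'n) set)"
  then have f: "finite (UNIV :: 'n site set)" using finite_prod by blast
  have "inj (\<lambda>k::int. (\<lambda>_::'n. k))" by (auto simp: inj_on_def fun_eq_iff)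
  then have "finite (UNIV :: int set)" using finite_subset[OF subset_UNIV f] finite_imageD by blast
  then show False by simp
qed

lemma zero_one_Xev:
  "measure (bond_perc q) (Xev :: ('n::finite site \<times> 'n \<Rightarrow> bool) set) = 0 \<or>
   measure (bond_perc q) (Xev :: ('n::finite site \<times> 'n \<Rightarrow> bool) set) = 1"
proof -
  interpret P: prob_space "bond_perc q :: ('n site \<times> 'n \<Rightarrow> bool) measure" by (rule prob_bond)
  obtain e' where e': "bij_betw e' (UNIV :: ('n site \<times> 'n) set) (UNIV :: nat set)"
    using countableE_infinite[OF countableI_type infinite_bonds] by blast
  define e where "e = inv e'"
  have bij_e: "bij e" unfolding e_def using e' by (simp add: bij_imp_bij_inv)
  let ?B = "measure_pmf (bernoulli_pmf q)"
  define A where "A n = sigma_sets (space (bond_perc q)) {(\<lambda>\<eta>. \<eta> (e n)) -` S \<inter> space (bond_perc q) | S. S \<in> sets ?B}" for n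
  have rv: "(\<lambda>\<eta>. \<eta> (e i)) \<in> measurable (bond_perc q) ?B" for i
    unfolding bond_perc_def by (rule measurable_component_singleton) simp
  have comp: "distr (bond_perc q) ?B (\<lambda>\<eta>. \<eta> (e i)) = ?B" for i
    unfolding bond_perc_def by (rule distr_PiM_component) (auto simp: prob_space_measure_pmf)
  have reidx: "distr (bond_perc q) (PiM UNIV (\<lambda>_. ?B)) (\<lambda>x. \<lambda>i\<in>UNIV. x (e i)) = PiM UNIV (\<lambda>_. ?B)"
    unfolding bond_perc_def
    using distr_PiM_reindex[of UNIV "\<lambda>_. ?B" e UNIV] bij_e by (simp add: bij_def prob_space_measure_pmf)
  have indep: "P.indep_vars (\<lambda>_. ?B) (\<lambda>n \<eta>. \<eta> (e n)) UNIV"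
    by (subst P.indep_vars_iff_distr_eq_PiM) (simp_all add: rv comp reidx)
  then have ind: "P.indep_sets A UNIV" unfolding P.indep_vars_def A_def by (rule conjunct2)
  have sa: "sigma_algebra (space (bond_perc q)) (A i)" for i
    unfolding A_def by (rule sigma_algebra_sigma_sets) auto
  have "Xev \<in> sigma_sets (space (bond_perc q)) (\<Union> (A ` {n..}))" for n
  proof -
    let ?G = "\<Union> (A ` {n..})"
    define Mn where "Mn = measure_of (UNIV :: ('n site \<times> 'n \<Rightarrow> bool) set) ?G (\<lambda>_. 0)"
    have sMn: "sets Mn = sigma_sets UNIV ?G" unfolding Mn_def by (rule sets_measure_of) simp
    have spMn: "space Mn = UNIV" unfolding Mn_def by (rule space_measure_of) simp
    define T where "T = e ` {..<n}"
    have meas: "(\<lambda>\<eta> b. if b \<in> T then True else \<eta> b) \<in> measurable Mn BN"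
    proof (rule measurable_PiM_single'[where f="\<lambda>b \<eta>. if b \<in> T then True else \<eta> b"])
      fix b :: "'n site \<times> 'n"
      show "(\<lambda>\<eta>. if b \<in> T then True else \<eta> b) \<in> measurable Mn (count_space UNIV)"
      proof (cases "b \<in> T")
        case True then show ?thesis by simp
      next
        case False
        obtain j where bj: "b = e j" using bij_e by (metis bij_pointE)
        with False have jn: "j \<ge> n" unfolding T_def by (metis lessThan_iff imageI not_le)
        have "(\<lambda>\<eta>. \<eta> (e j)) -` {a} \<inter> space Mn \<in> sets Mn" for a
        proof -
          have "(\<lambda>\<eta>. \<eta> (e j)) -` {a} \<inter> space (bond_perc q) \<in> A j"
            unfolding A_def by (rule sigma_sets.Basic) auto
          then have "(\<lambda>\<eta>. \<eta> (e j)) -` {a} \<inter> space (bond_perc q) \<in> ?G" using jn by blast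
          then show ?thesis unfolding sMn spMn by (auto intro: sigma_sets.Basic)
        qed
        then have "(\<lambda>\<eta>. \<eta> (e j)) \<in> measurable Mn (count_space UNIV)"
          by (subst measurable_count_space_eq2) (auto simp: spMn)
        then show ?thesis using False bj by simp
      qed
    qed (simp add: spMn)
    have "(\<lambda>\<eta> b. if b \<in> T then True else \<eta> b) -` Xev \<inter> space Mn \<in> sets Mn"
      using measurable_sets[OF meas Xev_sets] .
    moreover have "(\<lambda>\<eta> b. if b \<in> T then True else \<eta> b) -` Xev \<inter> space Mn = Xev"
    proof -
      have "(\<lambda>b. if b \<in> T then True else \<eta> b) \<in> Xev \<longleftrightarrow> \<eta> \<in> Xev" for \<eta>
      proof
        assume "(\<lambda>b. if b \<in> T then True else \<eta> b) \<in> Xev"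
        then have fin: "\<And>t. finite (cluster (\<lambda>b. if b \<in> T then True else \<eta> b) t)" unfolding Xev_def by simp
        have "finite (cluster \<eta> y)" for y
          by (rule finite_subset[OF cluster_mono fin]) simp
        then show "\<eta> \<in> Xev" unfolding Xev_def by simp
      next
        assume "\<eta> \<in> Xev"
        then have fin: "\<And>t. finite (cluster \<eta> t)" unfolding Xev_def by simp
        have fT: "finite T" unfolding T_def by simp
        have "finite (cluster (\<lambda>b. if b \<in> T then True else \<eta> b) y)" for y
          by (rule cluster_finite_mod[OF fT _ fin]) auto
        then show "(\<lambda>b. if b \<in> T then True else \<eta> b) \<in> Xev" unfolding Xev_def by simp
      qed
      then show ?thesis unfolding spMn vimage_def by blast
    qed
    ultimately show ?thesis using sMn by simp
  qed
  then have tail: "Xev \<in> P.tail_events A" unfolding P.tail_events_def by blast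
  from P.kolmogorov_0_1_law[OF sa ind tail] show ?thesis .
qed



lemma map_not_bernoulli:
  assumes "0 \<le> p" "p \<le> 1"
  shows "map_pmf Not (bernoulli_pmf p) = bernoulli_pmf (1 - p)"
proof (rule pmf_eqI)
  fix x :: bool
  have "pmf (map_pmf Not (bernoulli_pmf p)) x = measure (bernoulli_pmf p) {\<not> x}"
  proof -
    have "Not -` {x} = {\<not> x}" by auto
    then show ?thesis by (simp add: pmf_map)
  qed
  also have "\<dots> = pmf (bernoulli_pmf p) (\<not> x)" by (simp add: measure_pmf_single)
  also have "\<dots> = pmf (bernoulli_pmf (1 - p)) x" using assms by (cases x) simp_all
  finally show "pmf (map_pmf Not (bernoulli_pmf p)) x = pmf (bernoulli_pmf (1 - p)) x" .
qed

lemma inj_gface: "inj gface"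
proof (rule injI)
  fix a b :: "'n site \<times> 'n"
  assume h: "gface a = gface b"
  obtain x i where a: "a = (x, i)" by (cases a)
  obtain y j where b: "b = (y, j)" by (cases b)
  from h have ij: "i = j" and xy: "x(i := x i + 1) = y(i := y i + 1)" unfolding a b gface_def by auto
  have "x = y"
  proof
    fix k show "x k = y k" using fun_cong[OF xy, of k] by (cases "k = i") auto
  qed
  then show "a = b" using a b ij by simp
qed

lemma face_perc_prob: "prob_space (face_perc p)"
  unfolding face_perc_def by (intro prob_space_PiM prob_space_measure_pmf)

lemma sets_face[measurable_cong]:
  "sets (face_perc p :: ('n::finite face \<Rightarrow> bool) measure) = sets (PiM UNIV (\<lambda>_. count_space UNIV))"
  unfolding face_perc_def by (rule sets_PiM_cong) auto

lemma space_face[simp]: "space (face_perc p) = UNIV"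
  unfolding face_perc_def by (simp add: space_PiM PiE_UNIV_domain)

lemma Phi_meas: "Phi \<in> measurable (face_perc p) (bond_perc q :: ('n::finite site \<times> 'n \<Rightarrow> bool) measure)"
proof -
  have "(\<lambda>\<omega> b. \<not> \<omega> (gface b)) \<in> measurable (face_perc p) (bond_perc q :: ('n::finite site \<times> 'n \<Rightarrow> bool) measure)"
    unfolding bond_perc_def
  proof (rule measurable_PiM_single'[where f="\<lambda>b \<omega>. \<not> \<omega> (gface b)"])
    fix b :: "'n site \<times> 'n"
    have "(\<lambda>\<omega>. \<omega> (gface b)) \<in> measurable (face_perc p) (measure_pmf (bernoulli_pmf p))"
      unfolding face_perc_def by (rule measurable_component_singleton) simp
    then have "(\<lambda>\<omega>. \<omega> (gface b)) \<in> measurable (face_perc p) (measure_pmf (bernoulli_pmf q))"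
      using measurable_cong_sets[of "face_perc p" "face_perc p" "measure_pmf (bernoulli_pmf p)" "measure_pmf (bernoulli_pmf q)"] by simp
    then show "(\<lambda>\<omega>. \<not> \<omega> (gface b)) \<in> measurable (face_perc p) (measure_pmf (bernoulli_pmf q))"
      by simp
  qed simp
  then show ?thesis unfolding Phi_def[abs_def] .
qed

lemma coupling:
  assumes "0 \<le> p" "p \<le> 1"
  shows "distr (face_perc p) (bond_perc (1 - p)) Phi = (bond_perc (1 - p) :: ('n::finite site \<times> 'n \<Rightarrow> bool) measure)"
proof -
  let ?Bp = "measure_pmf (bernoulli_pmf p)"
  let ?Bq = "measure_pmf (bernoulli_pmf (1 - p))"
  let ?Pp = "bond_perc p :: ('n site \<times> 'n \<Rightarrow> bool) measure"
  have reidx: "distr (face_perc p) ?Pp (\<lambda>\<omega> b. \<omega> (gface b)) = ?Pp"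
    unfolding face_perc_def bond_perc_def
    using distr_PiM_reindex[of UNIV "\<lambda>_. ?Bp" gface UNIV] inj_gface
    by (simp add: prob_space_measure_pmf restrict_UNIV)
  interpret P: prob_space ?Pp by (rule prob_bond)
  have rv: "(\<lambda>\<eta>. \<eta> b) \<in> measurable ?Pp ?Bp" for b
    unfolding bond_perc_def by (rule measurable_component_singleton) simp
  have comp: "distr ?Pp ?Bp (\<lambda>\<eta>. \<eta> b) = ?Bp" for b
    unfolding bond_perc_def by (rule distr_PiM_component) (auto simp: prob_space_measure_pmf)
  have idd: "distr ?Pp (PiM UNIV (\<lambda>_. ?Bp)) (\<lambda>x. \<lambda>i\<in>UNIV. x i) = PiM UNIV (\<lambda>_. ?Bp)"
    unfolding bond_perc_def by (simp add: distr_id2 restrict_UNIV)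
  have ind0: "P.indep_vars (\<lambda>_. ?Bp) (\<lambda>b \<eta>. \<eta> b) UNIV"
    by (subst P.indep_vars_iff_distr_eq_PiM) (simp_all add: rv comp idd)
  have ind1: "P.indep_vars (\<lambda>_. ?Bq) (\<lambda>b \<eta>. \<not> \<eta> b) UNIV"
    by (rule P.indep_vars_compose2[OF ind0, where Y="\<lambda>_. Not"]) (simp add: measurable_cong_sets)
  have rv1: "(\<lambda>\<eta>. \<not> \<eta> b) \<in> measurable ?Pp ?Bq" for b
    using rv[of b] by (simp add: measurable_cong_sets)
  have comp1: "distr ?Pp ?Bq (\<lambda>\<eta>. \<not> \<eta> b) = ?Bq" for b
  proof -
    have "distr ?Pp ?Bq (\<lambda>\<eta>. \<not> \<eta> b) = distr (distr ?Pp ?Bp (\<lambda>\<eta>. \<eta> b)) ?Bq Not"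
      by (subst distr_distr) (auto simp: rv comp_def measurable_cong_sets)
    also have "\<dots> = distr ?Bp ?Bq Not" by (simp add: comp)
    also have "\<dots> = distr ?Bp (count_space UNIV) Not" by (rule distr_cong) auto
    also have "\<dots> = measure_pmf (map_pmf Not (bernoulli_pmf p))" by (simp add: map_pmf_rep_eq)
    also have "\<dots> = ?Bq" using map_not_bernoulli[OF assms] by simp
    finally show ?thesis .
  qed
  have neg: "distr ?Pp (PiM UNIV (\<lambda>_. ?Bq)) (\<lambda>x. \<lambda>i\<in>UNIV. \<not> x i) = PiM UNIV (\<lambda>_. ?Bq)"
    using ind1 by (subst (asm) P.indep_vars_iff_distr_eq_PiM) (simp_all add: rv1 comp1)
  have neg': "distr ?Pp (bond_perc (1 - p)) (\<lambda>x b. \<not> x b) = bond_perc (1 - p)"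
    using neg unfolding bond_perc_def by (simp add: restrict_UNIV)
  have m1: "(\<lambda>\<omega> b. \<omega> (gface b)) \<in> measurable (face_perc p) ?Pp"
  proof -
    have "(\<lambda>\<omega> b. \<omega> (gface b)) \<in> measurable (face_perc p) ?Pp"
      unfolding bond_perc_def
    proof (rule measurable_PiM_single'[where f="\<lambda>b \<omega>. \<omega> (gface b)"])
      fix b :: "'n site \<times> 'n"
      show "(\<lambda>\<omega>. \<omega> (gface b)) \<in> measurable (face_perc p) (measure_pmf (bernoulli_pmf p))"
        unfolding face_perc_def by (rule measurable_component_singleton) simp
    qed simp
    then show ?thesis .
  qed
  have m2: "(\<lambda>x b. \<not> x b) \<in> measurable ?Pp (bond_perc (1 - p) :: ('n site \<times> 'n \<Rightarrow> bool) measure)"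
    unfolding bond_perc_def
    by (rule measurable_PiM_single'[where f="\<lambda>b x. \<not> x b"]) (auto simp: measurable_cong_sets bond_perc_def[symmetric] rv1)
  have "distr (face_perc p) (bond_perc (1 - p)) Phi = distr (distr (face_perc p) ?Pp (\<lambda>\<omega> b. \<omega> (gface b))) (bond_perc (1 - p)) (\<lambda>x b. \<not> x b)"
    by (subst distr_distr[OF m2 m1]) (simp add: comp_def Phi_def[abs_def])
  also have "\<dots> = bond_perc (1 - p)" by (simp add: reidx neg')
  finally show ?thesis .
qed



lemma pred_comp_any[measurable]: "Measurable.pred (PiM UNIV (\<lambda>_. count_space UNIV)) (\<lambda>\<omega>. \<omega> b)"
  by (rule measurable_component_singleton) simp

lemma theta0: "bond_theta TYPE('n::finite) 0 = 0"
proof -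
  interpret P: prob_space "bond_perc 0 :: ('n site \<times> 'n \<Rightarrow> bool) measure" by (rule prob_bond)
  have ae1: "AE x in measure_pmf (bernoulli_pmf 0). \<not> x"
    by (auto simp: AE_measure_pmf_iff set_pmf_eq)
  have "AE \<eta> in (bond_perc 0 :: ('n site \<times> 'n \<Rightarrow> bool) measure). \<not> \<eta> b" for b
    unfolding bond_perc_def
    by (rule AE_PiM_component[where M="\<lambda>_. measure_pmf (bernoulli_pmf 0)" and P="Not", OF _ _ ae1]) (auto simp: prob_space_measure_pmf)
  then have "AE \<eta> in (bond_perc 0 :: ('n site \<times> 'n \<Rightarrow> bool) measure). \<forall>b. \<not> \<eta> b"
    by (simp add: AE_all_countable)
  then have "AE \<eta> in (bond_perc 0 :: ('n site \<times> 'n \<Rightarrow> bool) measure). \<not> infinite (cluster \<eta> (\<lambda>_. 0))"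
  proof (rule eventually_mono)
    fix \<eta> :: "'n site \<times> 'n \<Rightarrow> bool" assume h: "\<forall>b. \<not> \<eta> b"
    have "z = (\<lambda>_. 0)" if "(bond_adj \<eta>)\<^sup>*\<^sup>* (\<lambda>_. 0) z" for z
      using that by (cases rule: rtranclp.cases) (auto simp: bond_adj_def h)
    then have "cluster \<eta> (\<lambda>_. 0) \<subseteq> {(\<lambda>_. 0)}" unfolding cluster_def by auto
    then show "\<not> infinite (cluster \<eta> (\<lambda>_. 0))" using finite_subset by auto
  qed
  from P.prob_eq_0_AE[OF this] show ?thesis unfolding bond_theta_def by simp
qed

lemma theta_pos:
  assumes "0 \<le> p" "p < 1 - pc_bond TYPE('n::finite)"
  shows "p < 1" "bond_theta TYPE('n) (1 - p) > 0"
proof -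
  define S where "S = {p. 0 \<le> p \<and> p \<le> 1 \<and> bond_theta TYPE('n) p = 0}"
  have S0: "0 \<in> S" unfolding S_def using theta0 by simp
  have bdd: "bdd_above S" unfolding S_def by (auto intro: bdd_aboveI[where M=1])
  have "0 \<le> pc_bond TYPE('n)" unfolding pc_bond_def S_def[symmetric] by (rule cSup_upper[OF S0 bdd])
  then show p1: "p < 1" using assms by linarith
  have nn: "bond_theta TYPE('n) (1 - p) \<ge> 0" unfolding bond_theta_def by simp
  have "bond_theta TYPE('n) (1 - p) \<noteq> 0"
  proof
    assume "bond_theta TYPE('n) (1 - p) = 0"
    then have "1 - p \<in> S" unfolding S_def using assms p1 by simp
    then have "1 - p \<le> pc_bond TYPE('n)" unfolding pc_bond_def S_def[symmetric] by (rule cSup_upper[OF _ bdd])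
    then show False using assms by linarith
  qed
  with nn show "bond_theta TYPE('n) (1 - p) > 0" by simp
qed

lemma encloses_K_iff:
  "encloses (K \<omega>) V \<longleftrightarrow> (\<exists>F\<in>{F::'n::finite face set. finite F \<and>
     (\<exists>x. x \<notin> \<Union>(face_set ` F) \<and>
          bounded (connected_component_set (- \<Union>(face_set ` F)) x) \<and>
          V \<subseteq> connected_component_set (- \<Union>(face_set ` F)) x)}. \<forall>f\<in>F. \<omega> f)"
  unfolding encloses_def face_in_K by blast

lemma E_sets:
  "{\<omega> \<in> space (face_perc p :: ('n::finite face \<Rightarrow> bool) measure). encloses (K \<omega>) V} \<in> sets (face_perc p)"
proof -
  define Good where "Good = {F::'n face set. finite F \<and>
     (\<exists>x. x \<notin> \<Union>(face_set ` F) \<and>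
          bounded (connected_component_set (- \<Union>(face_set ` F)) x) \<and>
          V \<subseteq> connected_component_set (- \<Union>(face_set ` F)) x)}"
  have cG: "countable Good" unfolding Good_def
    by (rule countable_subset[OF _ countable_Collect_finite]) auto
  have "{\<omega> \<in> space (face_perc p :: ('n::finite face \<Rightarrow> bool) measure). encloses (K \<omega>) V} = (\<Union>F\<in>Good. {\<omega>. \<forall>f\<in>F. \<omega> f})"
    unfolding encloses_K_iff Good_def[symmetric] by auto
  also have "\<dots> \<in> sets (face_perc p)"
  proof (rule sets.countable_UN'[OF cG])
    show "(\<lambda>F. {\<omega>. \<forall>f\<in>F. \<omega> f}) ` Good \<subseteq> sets (face_perc p)"
    proof clarify
      fix F assume "F \<in> Good"
      then have fF: "finite F" unfolding Good_def by simp
      have "{\<omega> \<in> space (PiM UNIV (\<lambda>_. count_space UNIV)). \<forall>f\<in>F. \<omega> f} \<in> sets (PiM UNIV (\<lambda>_. count_space UNIV) :: ('n face \<Rightarrow> bool) measure)"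
        using fF by measurable
      then show "{\<omega>. \<forall>f\<in>F. \<omega> f} \<in> sets (face_perc p)"
        by (simp add: sets_face space_PiM PiE_UNIV_domain)
    qed
  qed
  finally show ?thesis .
qed

lemma cpt_in_dual_box:
  assumes "\<forall>i. \<bar>y i\<bar> < int n"
  shows "cpt y \<in> dual_box n"
proof -
  have b: "\<bar>(of_int (y i) :: real) + 1/2\<bar> < real n" for i
  proof -
    have "\<bar>y i\<bar> < int n" using assms by blast
    then have "\<bar>y i\<bar> \<le> int n - 1" by linarith
    then have "(of_int \<bar>y i\<bar> :: real) \<le> of_int (int n - 1)" by (simp only: of_int_le_iff)
    then have "\<bar>(of_int (y i) :: real)\<bar> \<le> real n - 1" by simp
    then show ?thesis by linarith
  qed
  have "cpt y = (\<chi> i. of_int (y i) + 1/2)" unfolding cpt_def ..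
  moreover have "\<forall>i. \<bar>(of_int (y i) :: real) + 1/2\<bar> < real n" using b by blast
  ultimately show ?thesis unfolding dual_box_def by blast
qed


theorem lemma3p4:
  fixes p :: real
  assumes "CARD('n::finite) \<ge> 2"
    and "0 \<le> p"
    and "p < 1 - pc_bond TYPE('n)"
  shows "(\<forall>n. {\<omega> \<in> space (face_perc p :: ('n face \<Rightarrow> bool) measure).
                 encloses (K \<omega>) (dual_box n)} \<in> sets (face_perc p))
       \<and> (\<lambda>n. measure (face_perc p :: ('n face \<Rightarrow> bool) measure)
               {\<omega> \<in> space (face_perc p). encloses (K \<omega>) (dual_box n)}) \<longlonglongrightarrow> 0"
proof -
  from theta_pos[OF assms(2,3)] have p1: "p < 1" and tpos: "bond_theta TYPE('n) (1 - p) > 0" by auto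
  let ?F = "face_perc p :: ('n face \<Rightarrow> bool) measure"
  let ?B = "bond_perc (1 - p) :: ('n site \<times> 'n \<Rightarrow> bool) measure"
  let ?E = "\<lambda>n. {\<omega> \<in> space ?F. encloses (K \<omega>) (dual_box n)}"
  have Es: "\<forall>n. ?E n \<in> sets ?F" using E_sets by blast
  interpret B: prob_space ?B by (rule prob_bond)
  interpret FP: prob_space ?F by (rule face_perc_prob)
  define Oi where "Oi = {\<eta> :: 'n site \<times> 'n \<Rightarrow> bool. infinite (cluster \<eta> (\<lambda>_. 0))}"
  have "{\<eta> \<in> space BN. \<not> finite (cluster \<eta> ((\<lambda>_. 0)::'n site))} \<in> sets (BN :: ('n site \<times> 'n \<Rightarrow> bool) measure)"
    by measurable
  then have Ois: "Oi \<in> sets ?B" unfolding Oi_def by (simp add: sets_bond space_PiM PiE_UNIV_domain)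
  have mO: "measure ?B Oi > 0" using tpos unfolding bond_theta_def Oi_def .
  have Xs: "Xev \<in> sets ?B" using Xev_sets by (simp add: sets_bond)
  have "Xev \<subseteq> space ?B - Oi" unfolding Xev_def Oi_def by auto
  then have "measure ?B Xev \<le> measure ?B (space ?B - Oi)"
    by (rule B.finite_measure_mono) (rule sets.compl_sets[OF Ois])
  also have "\<dots> = 1 - measure ?B Oi" using B.prob_compl[OF Ois] by simp
  finally have "measure ?B Xev < 1" using mO by linarith
  with zero_one_Xev[of "1-p"] have X0: "measure ?B Xev = 0" by auto
  define G where "G n = {\<eta> :: 'n site \<times> 'n \<Rightarrow> bool. \<forall>y. (\<forall>i. \<bar>y i\<bar> < int n) \<longrightarrow> finite (cluster \<eta> y)}" for n
  have Gs: "G n \<in> sets ?B" for n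
  proof -
    have "{\<eta> \<in> space BN. \<forall>y. (\<forall>i. \<bar>y i\<bar> < int n) \<longrightarrow> finite (cluster \<eta> y)} \<in> sets (BN :: ('n site \<times> 'n \<Rightarrow> bool) measure)"
      by measurable
    then show ?thesis unfolding G_def by (simp add: sets_bond space_PiM PiE_UNIV_domain)
  qed
  have dec: "decseq G"
  proof (rule decseq_SucI)
    fix n
    have "(\<forall>i. \<bar>y i\<bar> < int (Suc n))" if "\<forall>i. \<bar>y i\<bar> < int n" for y :: "'n site"
    proof
      fix i
      have "\<bar>y i\<bar> < int n" using that by blast
      then show "\<bar>y i\<bar> < int (Suc n)" by simp
    qed
    then show "G (Suc n) \<subseteq> G n" unfolding G_def by blast
  qed
  have GX: "(\<Inter>n. G n) = Xev"
  proof
    show "(\<Inter>n. G n) \<subseteq> Xev"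
    proof
      fix \<eta> assume h: "\<eta> \<in> (\<Inter>n. G n)"
      have "finite (cluster \<eta> y)" for y
      proof -
        obtain m :: nat where m: "\<forall>z\<in>{y}. \<forall>i. \<bar>z i\<bar> \<le> int m" using finite_sites_iff[of "{y}"] by auto
        have "\<forall>i. \<bar>y i\<bar> < int (Suc m)"
        proof
          fix i
          have "\<bar>y i\<bar> \<le> int m" using m by blast
          then show "\<bar>y i\<bar> < int (Suc m)" by simp
        qed
        with h show ?thesis unfolding G_def by blast
      qed
      then show "\<eta> \<in> Xev" unfolding Xev_def by simp
    qed
  next
    show "Xev \<subseteq> (\<Inter>n. G n)" unfolding Xev_def G_def by auto
  qed
  have lim: "(\<lambda>n. measure ?B (G n)) \<longlonglongrightarrow> 0"
    using B.finite_Lim_measure_decseq[of G] Gs dec GX X0 by auto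
  have cpl: "distr ?F ?B Phi = ?B" by (rule coupling) (use assms(2) p1 in auto)
  have bound: "measure ?F (?E n) \<le> measure ?B (G n)" for n
  proof -
    have sub: "?E n \<subseteq> Phi -` G n \<inter> space ?F"
    proof
      fix \<omega> assume "\<omega> \<in> ?E n"
      then obtain Fs x where Fs: "\<forall>f\<in>Fs. face_set f \<subseteq> K \<omega>"
        and bd: "bounded (connected_component_set (- \<Union>(face_set ` Fs)) x)"
        and V: "dual_box n \<subseteq> connected_component_set (- \<Union>(face_set ` Fs)) x"
        unfolding encloses_def by auto
      have "finite (cluster (Phi \<omega>) y)" if "\<forall>i. \<bar>y i\<bar> < int n" for y
        using enclosed_finite[OF Fs bd] V cpt_in_dual_box[OF that] by blast
      then show "\<omega> \<in> Phi -` G n \<inter> space ?F" unfolding G_def by simp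
    qed
    have "measure ?F (?E n) \<le> measure ?F (Phi -` G n \<inter> space ?F)"
      by (rule FP.finite_measure_mono[OF sub]) (rule measurable_sets[OF Phi_meas Gs])
    also have "\<dots> = measure (distr ?F ?B Phi) (G n)" by (rule measure_distr[symmetric, OF Phi_meas Gs])
    also have "\<dots> = measure ?B (G n)" using cpl by simp
    finally show ?thesis .
  qed
  have ev1: "\<forall>\<^sub>F n in sequentially. 0 \<le> measure ?F (?E n)"
    by (rule always_eventually) (rule allI, rule measure_nonneg)
  have ev2: "\<forall>\<^sub>F n in sequentially. measure ?F (?E n) \<le> measure ?B (G n)"
    by (rule always_eventually) (rule allI, rule bound)
  have "(\<lambda>n. measure ?F (?E n)) \<longlonglongrightarrow> 0"
    by (rule tendsto_sandwich[OF ev1 ev2 tendsto_const lim])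
  with Es show ?thesis by blast
qed


end
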